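(* If $k>\ell\geq t+2$ and $n\geq\max\{2L(k,t),\ t+1+(k-t)(\ell-t)\}$, then $r_1(n,k,\ell,t)>r_1(n,\ell,k,t)$.
   Context: $S(n,k)$ is the Stirling number of the second kind, with $S(n,a)=0$ for $a\leq0$. $L(k,t)=(t+1)+(k-t+1)\log_2((t+1)(k-t+1))$. $r_1(n,k,\ell,t)=\Big(\sum_{j=1}^{\ell-t}(-1)^{j-1}\binom{\ell-t}{j}S(n-t-j,k-t-j)\Big)\big(S(n-t,\ell-t)+t\big)$. *)

theory Defs
  imports "HOL-Combinatorics.Stirling" Complex_Main
begin

definition S :: "int \<Rightarrow> int \<Rightarrow> int" where
  "S n a = (if a \<le> 0 \<or> n < 0 then 0 else int (Stirling (nat n) (nat a)))"

definition L :: "nat \<Rightarrow> nat \<Rightarrow> real" where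
  "L k t = real (t + 1) + (real k - real t + 1) * log 2 ((real t + 1) * (real k - real t + 1))"

definition r1 :: "nat \<Rightarrow> nat \<Rightarrow> nat \<Rightarrow> nat \<Rightarrow> int" where
  "r1 n k l t =
     (\<Sum>j\<in>{1..l - t}. (-1) ^ (j - 1) * int ((l - t) choose j)
        * S (int n - int t - int j) (int k - int t - int j))
     * (S (int n - int t) (int l - int t) + int t)"

end

theory Submission
  imports Defs
begin



definition Sp :: "int \<Rightarrow> int \<Rightarrow> int" where
  "Sp n c = (if n < 0 \<or> c < 0 then 0 else int (Stirling (nat n) (nat c)))"

lemma Sp_nonneg: "0 \<le> Sp n c"
  by (simp add: Sp_def)

lemma Sp_neg: "c < 0 \<Longrightarrow> Sp n c = 0"
  by (simp add: Sp_def)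

lemma Sp_nat: "Sp (int n) (int c) = int (Stirling n c)"
  by (simp add: Sp_def)

lemma S_Sp: "n \<noteq> 0 \<Longrightarrow> S n c = Sp n c"
proof -
  assume "n \<noteq> 0"
  show ?thesis
  proof (cases "n < 0 \<or> c < 0")
    case True then show ?thesis by (auto simp: S_def Sp_def)
  next
    case False
    have "nat n > 0" using False \<open>n \<noteq> 0\<close> by simp
    then obtain n' where "nat n = Suc n'"
      using gr0_implies_Suc by blast
    then show ?thesis using False by (cases "c = 0") (auto simp: S_def Sp_def)
  qed
qed

lemma Sp_rec: "n \<ge> 1 \<Longrightarrow> Sp n c = c * Sp (n-1) c + Sp (n-1) (c-1)"
proof -
  assume n: "n \<ge> 1"
  have "Suc (nat (n-1)) = nat (1 + (n-1))" using n by (intro Suc_nat_eq_nat_zadd1) simp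
  then have "nat n = Suc (nat (n-1))" by simp
  then obtain n' where n': "nat n = Suc n'" "nat (n-1) = n'" by blast
  show ?thesis
  proof (cases "c \<le> 0")
    case True
    then show ?thesis using n n' by (cases "c = 0") (auto simp: Sp_def)
  next
    case False
    have "Suc (nat (c-1)) = nat (1 + (c-1))" using False by (intro Suc_nat_eq_nat_zadd1) simp
    then have "nat c = Suc (nat (c-1))" by simp
    then obtain c' where c': "nat c = Suc c'" "nat (c-1) = c'" by blast
    have "int (nat c) = c" using False by simp
    then show ?thesis using n n' c' False by (auto simp: Sp_def algebra_simps)
  qed
qed

definition D :: "nat \<Rightarrow> int \<Rightarrow> int \<Rightarrow> int" where
  "D b m a = (\<Sum>j\<le>b. (-1)^j * int (b choose j) * Sp (m - int j) (a - int j))"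

lemma D_0: "D 0 m a = Sp m a"
  by (simp add: D_def)

lemma D_Suc: "D (Suc b) m a = D b m a - D b (m-1) (a-1)"
proof -
  have "D (Suc b) m a = Sp m a + (\<Sum>j\<le>b. (-1)^(Suc j) * int (Suc b choose Suc j) * Sp (m - int (Suc j)) (a - int (Suc j)))"
    unfolding D_def by (subst sum.atMost_Suc_shift) simp
  also have "\<dots> = Sp m a + (\<Sum>j\<le>b. (-1)^(Suc j) * int (b choose Suc j) * Sp (m - int (Suc j)) (a - int (Suc j)))
      + (\<Sum>j\<le>b. (-1)^(Suc j) * int (b choose j) * Sp (m - int (Suc j)) (a - int (Suc j)))"
    by (simp add: algebra_simps flip: sum.distrib)
  also have "Sp m a + (\<Sum>j\<le>b. (-1)^(Suc j) * int (b choose Suc j) * Sp (m - int (Suc j)) (a - int (Suc j)))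
      = (\<Sum>j\<le>Suc b. (-1)^j * int (b choose j) * Sp (m - int j) (a - int j))"
    by (subst sum.atMost_Suc_shift) simp
  also have "\<dots> = D b m a"
    unfolding D_def by simp
  also have "(\<Sum>j\<le>b. (-1)^(Suc j) * int (b choose j) * Sp (m - int (Suc j)) (a - int (Suc j)))
      = - D b (m-1) (a-1)"
    unfolding D_def by (simp add: sum_negf[symmetric] algebra_simps)
  finally show ?thesis by simp
qed

lemma D_neg: "a < 0 \<Longrightarrow> D b m a = 0"
  by (simp add: D_def Sp_neg)

lemma D_R: "int b < m \<Longrightarrow>
   D b m a = a * D b (m-1) a + D b (m-1) (a-1) + int b * D (b-1) (m-2) (a-1)"
proof (induction b arbitrary: m a)
  case 0
  then show ?case using Sp_rec[of m a] by (simp add: D_0)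
next
  case (Suc b)
  have IH1: "D b m a = a * D b (m-1) a + D b (m-1) (a-1) + int b * D (b-1) (m-2) (a-1)"
    using Suc by simp
  have IH2: "D b (m-1) (a-1) = (a-1) * D b (m-2) (a-1) + D b (m-2) (a-2) + int b * D (b-1) (m-3) (a-2)"
    using Suc.IH[of "m-1" "a-1"] Suc.prems by (simp add: algebra_simps)
  have E1: "D (Suc b) (m-1) a = D b (m-1) a - D b (m-2) (a-1)"
    using D_Suc[of b "m-1" a] by (simp add: algebra_simps)
  have E2: "D (Suc b) (m-1) (a-1) = D b (m-1) (a-1) - D b (m-2) (a-2)"
    using D_Suc[of b "m-1" "a-1"] by (simp add: algebra_simps)
  have E3: "int b * D (b-1) (m-2) (a-1) - int b * D (b-1) (m-3) (a-2) = int b * D b (m-2) (a-1)"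
  proof (cases b)
    case 0 then show ?thesis by simp
  next
    case (Suc b')
    have h: "D (Suc b') (m-2) (a-1) = D b' (m-2) (a-1) - D b' (m-3) (a-2)"
      using D_Suc[of b' "m-2" "a-1"] by (simp add: algebra_simps)
    show ?thesis unfolding Suc by (simp only: diff_Suc_1 h right_diff_distrib)
  qed
  have F1: "a * D (Suc b) (m-1) a = a * D b (m-1) a - a * D b (m-2) (a-1)"
    unfolding E1 by (simp add: right_diff_distrib)
  have F2: "(a-1) * D b (m-2) (a-1) = a * D b (m-2) (a-1) - D b (m-2) (a-1)"
    by (simp add: left_diff_distrib)
  have F3: "int (Suc b) * D (Suc b - 1) (m-2) (a-1) = int b * D b (m-2) (a-1) + D b (m-2) (a-1)"
    by (simp add: distrib_right)
  have "D (Suc b) m a = D b m a - D b (m-1) (a-1)" by (rule D_Suc)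
  then show ?case using IH1 IH2 E2 E3 F1 F2 F3 by linarith
qed


lemma D_Rec2: "int b < m \<Longrightarrow> D (Suc b) m a = a * D b (m-1) a + int b * D (b-1) (m-2) (a-1)"
  using D_Suc[of b m a] D_R[of b m a] by simp

lemma D_nonneg: "int b \<le> m \<Longrightarrow> 0 \<le> D b m a"
proof (induction b arbitrary: m a rule: less_induct)
  case (less b)
  show ?case
  proof (cases "a < 0")
    case True then show ?thesis by (simp add: D_neg)
  next
    case False
    show ?thesis
    proof (cases b)
      case 0 then show ?thesis by (simp add: D_0 Sp_nonneg)
    next
      case (Suc b')
      have e: "D b m a = a * D b' (m-1) a + int b' * D (b'-1) (m-2) (a-1)"
        using D_Rec2[of b' m a] less.prems Suc by simp
      have h1: "0 \<le> D b' (m-1) a" using less.IH[of b' "m-1" a] less.prems Suc by simp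
      have h2: "0 \<le> int b' * D (b'-1) (m-2) (a-1)"
      proof (cases b')
        case 0 then show ?thesis by simp
      next
        case (Suc b'')
        have "0 \<le> D (b'-1) (m-2) (a-1)" using less.IH[of "b'-1" "m-2" "a-1"] less.prems Suc \<open>b = Suc b'\<close> by simp
        then show ?thesis by simp
      qed
      show ?thesis unfolding e using h1 h2 False by simp
    qed
  qed
qed

lemma D_le: "int i \<le> n \<Longrightarrow> D i n c \<le> Sp n c"
proof (induction i arbitrary: n c)
  case 0 then show ?case by (simp add: D_0)
next
  case (Suc i)
  have "0 \<le> D i (n-1) (c-1)" using D_nonneg[of i "n-1" "c-1"] Suc.prems by simp
  moreover have "D i n c \<le> Sp n c" using Suc by simp
  ultimately show ?case using D_Suc[of i n c] by simp
qed

lemma D_ge: "int i \<le> n \<Longrightarrow> Sp n c - int i * Sp (n-1) (c-1) \<le> D i n c"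
proof (induction i arbitrary: n c)
  case 0 then show ?case by (simp add: D_0)
next
  case (Suc i)
  have "D i (n-1) (c-1) \<le> Sp (n-1) (c-1)" using D_le[of i "n-1" "c-1"] Suc.prems by simp
  moreover have "Sp n c - int i * Sp (n-1) (c-1) \<le> D i n c" using Suc by simp
  ultimately show ?case using D_Suc[of i n c] by (simp add: algebra_simps)
qed

definition A :: "nat \<Rightarrow> int \<Rightarrow> int \<Rightarrow> int" where
  "A b m a = (\<Sum>j\<in>{1..b}. (-1)^(j-1) * int (b choose j) * Sp (m - int j) (a - int j))"

lemma A_eq: "A b m a = Sp m a - D b m a"
proof -
  have "{..b} = insert 0 {1..b}" by auto
  then have "D b m a = Sp m a + (\<Sum>j\<in>{1..b}. (-1)^j * int (b choose j) * Sp (m - int j) (a - int j))"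
    unfolding D_def by simp
  also have "(\<Sum>j\<in>{1..b}. (-1)^j * int (b choose j) * Sp (m - int j) (a - int j)) = - A b m a"
    unfolding A_def sum_negf[symmetric]
  proof (rule sum.cong)
    fix j assume "j \<in> {1..b}"
    then obtain j' where "j = Suc j'" by (cases j) auto
    then show "(-1)^j * int (b choose j) * Sp (m - int j) (a - int j) =
       - ((-1)^(j-1) * int (b choose j) * Sp (m - int j) (a - int j))" by simp
  qed simp
  finally show ?thesis by simp
qed

lemma A_Suc: "A (Suc b) m a = A b m a + D b (m-1) (a-1)"
  using D_Suc[of b m a] by (simp add: A_eq)

lemma A_sum: "A b m a = (\<Sum>i<b. D i (m-1) (a-1))"
  by (induction b) (simp_all add: A_Suc, simp add: A_def)

lemma A_upper: "int b \<le> m \<Longrightarrow> A b m a \<le> int b * Sp (m-1) (a-1)"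
proof -
  assume h: "int b \<le> m"
  have "A b m a \<le> (\<Sum>i<b. Sp (m-1) (a-1))"
    unfolding A_sum by (rule sum_mono) (use h in \<open>auto intro!: D_le\<close>)
  then show ?thesis by simp
qed

lemma A_nonneg: "int b \<le> m \<Longrightarrow> 0 \<le> A b m a"
  unfolding A_sum by (rule sum_nonneg) (auto intro!: D_nonneg)

lemma A_lower: "int b \<le> m \<Longrightarrow> int b * Sp (m-1) (a-1) - (\<Sum>i<b. int i) * Sp (m-2) (a-2) \<le> A b m a"
proof -
  assume h: "int b \<le> m"
  have "(\<Sum>i<b. Sp (m-1) (a-1) - int i * Sp (m-2) (a-2)) \<le> A b m a"
    unfolding A_sum
  proof (rule sum_mono)
    fix i assume "i \<in> {..<b}"
    then have "int i \<le> m - 1" using h by auto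
    from D_ge[OF this, of "a-1"] show "Sp (m-1) (a-1) - int i * Sp (m-2) (a-2) \<le> D i (m-1) (a-1)"
      by (simp add: algebra_simps)
  qed
  then show ?thesis by (simp add: sum_subtractf sum_distrib_right)
qed



definition ff :: "nat \<Rightarrow> nat \<Rightarrow> nat" where
  "ff x k = (\<Prod>i<k. x - i)"

lemma ff_0 [simp]: "ff x 0 = 1" by (simp add: ff_def)

lemma ff_Suc: "ff x (Suc k) = ff x k * (x - k)"
  by (simp add: ff_def)

lemma ff_zero: "x < k \<Longrightarrow> ff x k = 0"
  unfolding ff_def by (rule prod_zero) auto

lemma x_ff: "x * ff x k = ff x (Suc k) + k * ff x k"
proof (cases "k \<le> x")
  case True
  then have "x = (x - k) + k" by simp
  then have "x * ff x k = ((x - k) + k) * ff x k" by simp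
  then have "x * ff x k = (x - k) * ff x k + k * ff x k" by (simp only: add_mult_distrib)
  then show ?thesis by (simp add: ff_Suc mult.commute)
next
  case False
  then show ?thesis by (simp add: ff_zero)
qed

lemma pow_stirling: "x ^ n = (\<Sum>k\<le>n. Stirling n k * ff x k)"
proof (induction n)
  case 0 then show ?case by simp
next
  case (Suc n)
  have "x ^ Suc n = (\<Sum>k\<le>n. Stirling n k * (x * ff x k))"
    using Suc by (simp add: sum_distrib_left algebra_simps)
  also have "\<dots> = (\<Sum>k\<le>n. Stirling n k * ff x (Suc k)) + (\<Sum>k\<le>n. k * Stirling n k * ff x k)"
    by (simp add: x_ff algebra_simps sum.distrib)
  also have "(\<Sum>k\<le>n. k * Stirling n k * ff x k) = (\<Sum>k\<le>Suc n. k * Stirling n k * ff x k)"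
    by simp
  also have "\<dots> = (\<Sum>k\<le>n. Suc k * Stirling n (Suc k) * ff x (Suc k))"
    by (subst sum.atMost_Suc_shift) simp
  also have "(\<Sum>k\<le>n. Stirling n k * ff x (Suc k)) + (\<Sum>k\<le>n. Suc k * Stirling n (Suc k) * ff x (Suc k))
      = (\<Sum>k\<le>n. Stirling (Suc n) (Suc k) * ff x (Suc k))"
    by (simp add: sum.distrib[symmetric] algebra_simps)
  also have "\<dots> = (\<Sum>k\<le>Suc n. Stirling (Suc n) k * ff x k)"
    by (subst sum.atMost_Suc_shift) simp
  finally show ?case .
qed

lemma ff_fact: "k \<le> c \<Longrightarrow> ff c k * fact (c - k) = fact c"
proof (induction k)
  case 0 then show ?case by simp
next
  case (Suc k)
  then have "c - k = Suc (c - Suc k)" by simp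
  then have "fact (c - k) = (c - k) * fact (c - Suc k)" by (simp add: fact_Suc)
  then show ?case using Suc by (simp add: ff_Suc algebra_simps)
qed

lemma ff_same: "ff c c = fact c"
  using ff_fact[of c c] by simp

lemma ff_Suc_shift: "ff c (Suc k) = c * ff (c - 1) k"
  unfolding ff_def by (subst prod.lessThan_Suc_shift) (simp only: diff_zero diff_Suc_eq_diff_pred)

lemma ff_bound: "c \<ge> 1 \<Longrightarrow> ff c k \<le> c * ff (c-1) k + (if k = c then fact c else 0)"
proof (cases k)
  case 0
  assume "c \<ge> 1" then show ?thesis using 0 by simp
next
  case (Suc k')
  assume c: "c \<ge> 1"
  have e1: "ff c k = c * ff (c-1) k'" using Suc ff_Suc_shift by simp
  have e2: "ff (c-1) k = ff (c-1) k' * (c - 1 - k')" using Suc ff_Suc by simp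
  show ?thesis
  proof (cases "k < c")
    case True
    then have "1 \<le> c - 1 - k'" using Suc by simp
    then have "ff (c-1) k' \<le> ff (c-1) k" unfolding e2 by simp
    then have "ff c k \<le> c * ff (c-1) k" unfolding e1 by simp
    then show ?thesis by simp
  next
    case False
    then show ?thesis
      by (cases "k = c") (auto simp: ff_same ff_zero)
  qed
qed

lemma stirling_upper: "fact c * Stirling n c \<le> c ^ n"
proof (cases "c \<le> n")
  case True
  have "Stirling n c * ff c c \<le> (\<Sum>k\<le>n. Stirling n k * ff c k)"
    by (rule member_le_sum) (use True in auto)
  then show ?thesis by (simp add: pow_stirling ff_same mult.commute)
next
  case False then show ?thesis by simp
qed

lemma stirling_lower: "c \<ge> 1 \<Longrightarrow> c ^ n \<le> fact c * Stirling n c + c * (c - 1) ^ n"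
proof -
  assume c: "c \<ge> 1"
  have "c ^ n \<le> (\<Sum>k\<le>n. Stirling n k * (c * ff (c-1) k + (if k = c then fact c else 0)))"
    unfolding pow_stirling by (rule sum_mono) (use ff_bound[OF c] in \<open>simp add: mult_left_mono\<close>)
  also have "\<dots> = c * (\<Sum>k\<le>n. Stirling n k * ff (c-1) k) + (\<Sum>k\<le>n. Stirling n k * (if k = c then fact c else 0))"
    by (simp add: algebra_simps sum.distrib sum_distrib_left)
  also have "(\<Sum>k\<le>n. Stirling n k * (if k = c then fact c else 0)) \<le> fact c * Stirling n c"
    by (cases "c \<le> n") (auto simp: sum.delta' if_distrib cong: if_cong)
  finally show ?thesis by (simp add: pow_stirling[symmetric] algebra_simps)
qed



lemma exp_pow_bound:
  fixes c y :: real and N :: nat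
  assumes c: "c \<ge> 1" and y: "y > 0" and N: "real N \<ge> 2*c*ln y"
  shows "((c-1)/c)^N \<le> 1/y^2"
proof -
  have 0: "0 \<le> (c-1)/c" using c by simp
  have 1: "(c-1)/c \<le> exp(-1/c)"
  proof -
    have "(c-1)/c = 1 + (-1/c)" using c by (simp add: field_simps)
    also have "\<dots> \<le> exp (-1/c)" by (rule exp_ge_add_one_self)
    finally show ?thesis .
  qed
  have "((c-1)/c)^N \<le> exp(-1/c)^N" by (rule power_mono[OF 1 0])
  also have "\<dots> = exp(real N * (-1/c))" by (rule exp_of_nat_mult[symmetric])
  also have "\<dots> \<le> exp(-2*ln y)"
  proof -
    have "2*ln y \<le> real N / c" using N c by (simp add: field_simps)
    then show ?thesis by simp
  qed
  also have "exp(-2*ln y) = 1/y^2"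
  proof -
    have "ln (1/y^2) = -2*ln y" using y by (simp add: ln_div ln_realpow)
    then have "exp(-2*ln y) = exp (ln (1/y^2))" by simp
    also have "\<dots> = 1/y^2" using y by simp
    finally show ?thesis .
  qed
  finally show ?thesis .
qed

lemma margin_int:
  fixes p q :: int
  assumes "q \<ge> 1" "q \<le> p"
  shows "9*(p+2)*q \<le> 5*q*(q+1) + 5*(q+1)^2*(p+1-q)"
proof -
  define d where "d = p + 1 - q"
  have d1: "d \<ge> 1" using assms by (simp add: d_def)
  have p: "p = q + d - 1" by (simp add: d_def)
  have e: "5*q*(q+1) + 5*(q+1)^2*(p+1-q) - 9*(p+2)*q = d*(5*q^2+q+5) - 4*q^2 - 4*q"
    unfolding p by (simp add: algebra_simps power2_eq_square)
  have pos: "5*q^2+q+5 \<ge> 0" using assms by simp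
  have h1: "d*(5*q^2+q+5) \<ge> 5*q^2+q+5" using mult_right_mono[OF d1 pos] by simp
  have "q^2 - 3*q + 5 > 0"
  proof -
    have "q^2 - 3*q + 5 = (q-2)^2 + q + 1" by (simp add: algebra_simps power2_eq_square)
    moreover have "(q-2)^2 \<ge> 0" by simp
    ultimately show ?thesis using assms by linarith
  qed
  then have "0 \<le> d*(5*q^2+q+5) - 4*q^2 - 4*q" using h1 by linarith
  then have "0 \<le> 5*q*(q+1) + 5*(q+1)^2*(p+1-q) - 9*(p+2)*q" unfolding e .
  then show ?thesis by simp
qed

lemma margin_real:
  fixes p q M :: nat
  assumes q1: "q \<ge> 1" and qp: "q \<le> p" and M: "M + 1 \<ge> (p+2)*(q+1)"
  shows "(9/5) * (real p + 2) * (real q * (real p + 2))^(M+1) \<le> (real q + 1) * ((real p + 1) * (real q + 1))^(M+1)"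
proof -
  define u where "u = real q * (real p + 2)"
  define x where "x = (real p + 1 - real q) / u"
  have u: "u > 0" using q1 by (simp add: u_def)
  have x0: "x \<ge> 0" using qp u by (simp add: x_def)
  have v: "(real p + 1) * (real q + 1) = u * (1 + x)"
    using u by (simp add: x_def u_def field_simps)
  have B: "1 + real (M+1) * x \<le> (1 + x)^(M+1)"
    by (rule Bernoulli_inequality) (use x0 in simp)
  have Mx: "real (M+1) * x \<ge> (real q + 1)*(real p + 1 - real q)/real q"
  proof -
    have "real ((p+2)*(q+1)) \<le> real (M+1)" using M by (simp only: of_nat_le_iff)
    then have "real (M+1) \<ge> (real p + 2)*(real q + 1)" by (simp add: algebra_simps)
    then have "real (M+1) * x \<ge> (real p + 2)*(real q + 1) * x" by (rule mult_right_mono[OF _ x0])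
    also have "(real p + 2)*(real q + 1) * x = (real q + 1)*(real p + 1 - real q)/real q"
    proof -
      have xu: "x * u = real p + 1 - real q" using u by (simp add: x_def)
      have qpos: "real q \<noteq> 0" using q1 by simp
      have x2: "x * (real p + 2) = (real p + 1 - real q) / real q"
        using xu qpos by (subst eq_divide_eq) (auto simp: u_def ac_simps)
      have "(real p + 2)*(real q + 1)*x = (real q+1)*(x*(real p+2))" by (simp add: ac_simps)
      also have "\<dots> = (real q + 1)*(real p + 1 - real q)/real q" unfolding x2 by simp
      finally show ?thesis .
    qed
    finally show ?thesis .
  qed
  have mi: "9*(real p+2)*real q \<le> 5*real q*(real q+1) + 5*(real q+1)^2*(real p+1-real q)"
    using margin_int[of "int q" "int p"] q1 qp by (simp add: of_int_le_iff[symmetric, where 'a=real])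
  have key: "(9/5) * (real p + 2) \<le> (real q + 1) * (1 + real (M+1) * x)"
  proof -
    have "(real q + 1) * (1 + (real q + 1)*(real p + 1 - real q)/real q) \<ge> (9/5) * (real p + 2)"
      using mi q1 by (simp add: field_simps power2_eq_square)
    moreover have "(real q + 1) * (1 + real (M+1) * x) \<ge> (real q + 1) * (1 + (real q + 1)*(real p + 1 - real q)/real q)"
      using Mx by (intro mult_left_mono) auto
    ultimately show ?thesis by linarith
  qed
  have "(9/5) * (real p + 2) * u^(M+1) \<le> (real q + 1) * (1 + real (M+1) * x) * u^(M+1)"
    using key u by (intro mult_right_mono) auto
  also have "\<dots> \<le> (real q + 1) * (1 + x)^(M+1) * u^(M+1)"
    using B u by (intro mult_right_mono mult_left_mono) auto
  also have "\<dots> = (real q + 1) * ((real p + 1) * (real q + 1))^(M+1)"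
    unfolding v by (simp add: power_mult_distrib)
  finally show ?thesis unfolding u_def .
qed



lemma alg1:
  fixes P Q fP fq :: real
  assumes "fP > 0" "fq > 0" "Q > 0"
  shows "Q*(P^(M+1)/fP)*(Q^(M+2)/(Q*fq)) = Q*(P*Q)^(M+1)/(fP*fq)"
  using assms by (simp add: power_mult_distrib field_simps)

lemma alg2:
  fixes R q fP fq :: real
  assumes "R > 0" "fP > 0" "fq > 0"
  shows "R*((q^(M+1)/fq)*(R^(M+2)/(R*fP))) = R*(q*R)^(M+1)/(fP*fq)"
  using assms by (simp add: power_mult_distrib field_simps)

lemma key:
  fixes p q M t :: nat and s1 s2 sb sb1 sa Cb :: real
  assumes q1: "q \<ge> 1" and qp: "q \<le> p"
    and M: "M + 1 \<ge> (p+2)*(q+1)"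
    and logc: "real M \<ge> 2*(real p+1)*ln(real p+3)"
    and logb: "real (M+2) \<ge> 2*(real q+1)*ln(real p+3)"
    and tW: "10 * real t * fact (Suc (Suc p)) \<le> (real p+2)^(M+2)"
    and h1: "fact (Suc p) * s1 \<ge> (real p+1)^(M+1) - (real p+1)*(real p)^(M+1)"
    and h2: "fact p * s2 \<le> (real p)^M"
    and h3: "fact (Suc q) * sb \<ge> (real q+1)^(M+2) - (real q+1)*(real q)^(M+2)"
    and h4: "fact q * sb1 \<le> (real q)^(M+1)"
    and h5: "fact (Suc (Suc p)) * sa \<le> (real p+2)^(M+2)"
    and Cb: "2*Cb = (real q+1)*real q"
    and s2: "s2 \<ge> 0" and sb1: "sb1 \<ge> 0" and sa: "sa \<ge> 0"
  shows "((real q+1)*s1 - Cb*s2)*sb > (real p+2)*sb1*(sa + real t)"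
proof -
  define X where "X = (real p+1)^(M+1)/fact (Suc p)"
  define \<rho> where "\<rho> = (real p/(real p+1))^M"
  define Y where "Y = (real q+1)^(M+2)/fact (Suc q)"
  define e where "e = (real q/(real q+1))^(M+2)"
  define Z where "Z = (real q)^(M+1)/fact q"
  define W where "W = (real p+2)^(M+2)/fact (Suc (Suc p))"
  have fp: "fact (Suc p) > (0::real)" "fact p > (0::real)" "fact (Suc q) > (0::real)"
     "fact q > (0::real)" "fact (Suc (Suc p)) > (0::real)" by simp_all
  have Xpos: "X > 0" unfolding X_def by simp
  have Ypos: "Y > 0" unfolding Y_def by simp
  have Zpos: "Z > 0" unfolding Z_def using q1 by simp
  have Wpos: "W > 0" unfolding W_def by simp
  have rho0: "\<rho> \<ge> 0" unfolding \<rho>_def by simp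
  have e0: "e \<ge> 0" unfolding e_def by simp
  have rho: "\<rho> \<le> 1/(real p+3)^2"
    using exp_pow_bound[of "real p+1" "real p+3" M] logc unfolding \<rho>_def by simp
  have eb: "e \<le> 1/(real p+3)^2"
    using exp_pow_bound[of "real q+1" "real p+3" "M+2"] logb unfolding e_def by simp
  have pr: "real p * \<rho> \<le> 1/12"
  proof -
    have "real p * \<rho> \<le> real p * (1/(real p+3)^2)" by (rule mult_left_mono[OF rho]) simp
    also have "\<dots> \<le> 1/12"
    proof -
      have "12 * real p \<le> (real p+3)^2"
        using power2_eq_square[of "real p - 3"] zero_le_power2[of "real p - 3"]
        by (simp add: power2_eq_square algebra_simps)
      then show ?thesis by (simp add: field_simps)
    qed
    finally show ?thesis .
  qed
  have qe: "(real q+1) * e \<le> 1/8"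
  proof -
    have "(real q+1) * e \<le> (real p+1) * (1/(real p+3)^2)"
      using qp eb e0 by (intro mult_mono) auto
    also have "\<dots> \<le> 1/8"
    proof -
      have "8 * (real p+1) \<le> (real p+3)^2"
        using zero_le_power2[of "real p - 1"]
        by (simp add: power2_eq_square algebra_simps)
      then show ?thesis by (simp add: field_simps)
    qed
    finally show ?thesis .
  qed
  have rho_id: "(real p)^M = \<rho> * (real p+1)^M"
    unfolding \<rho>_def by (simp add: power_divide)
  have e_id: "(real q)^(M+2) = e * (real q+1)^(M+2)"
    unfolding e_def by (simp add: power_divide)
  have s1b: "s1 \<ge> X*(1 - real p*\<rho>)"
  proof -
    have "(real p+1)*(real p)^(M+1) = real p * \<rho> * (real p+1)^(M+1)"
      using rho_id by (simp add: algebra_simps)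
    then have "fact (Suc p) * s1 \<ge> (real p+1)^(M+1) * (1 - real p*\<rho>)"
      using h1 by (simp add: algebra_simps)
    then show ?thesis unfolding X_def using fp(1)
      by (simp add: field_simps)
  qed
  have s2b: "s2 \<le> \<rho> * X"
  proof -
    have ff: "fact (Suc p) = (real p+1) * fact p" by simp
    have "X = ((real p+1) * (real p+1)^M)/((real p+1)*fact p)" unfolding X_def ff by simp
    also have "\<dots> = (real p+1)^M / fact p"
      by (rule mult_divide_mult_cancel_left) simp
    finally have "X = (real p+1)^M / fact p" .
    then have "\<rho> * X = (real p)^M / fact p" using rho_id by simp
    moreover have "s2 \<le> (real p)^M / fact p"
      using h2 fp(2) by (subst pos_le_divide_eq[OF fp(2)]) (simp add: mult.commute)
    ultimately show ?thesis by simp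
  qed
  have Cb_le: "Cb \<le> (real q+1)*real p/2"
  proof -
    have "(real q+1)*real q \<le> (real q+1)*real p" using qp by (intro mult_left_mono) auto
    then show ?thesis using Cb by linarith
  qed
  have Cb0: "Cb \<ge> 0"
  proof -
    have "(real q+1)*real q \<ge> 0" by simp
    then show ?thesis using Cb by linarith
  qed
  have L1: "(real q+1)*s1 - Cb*s2 \<ge> (7/8)*((real q+1)*X)"
  proof -
    have a1: "(real q+1)*s1 \<ge> (real q+1)*(X*(1-real p*\<rho>))" by (rule mult_left_mono[OF s1b]) simp
    have a2: "Cb*s2 \<le> Cb*(\<rho>*X)" by (rule mult_left_mono[OF s2b Cb0])
    have a3: "Cb*(\<rho>*X) \<le> ((real q+1)*real p/2)*(\<rho>*X)"
      by (rule mult_right_mono[OF Cb_le]) (use rho0 Xpos in simp)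
    have a4: "(real q+1)*(X*(1-real p*\<rho>)) - ((real q+1)*real p/2)*(\<rho>*X)
        = ((real q+1)*X)*(1 - 3/2*(real p*\<rho>))" by (simp add: algebra_simps)
    have a5: "((real q+1)*X)*(1 - 3/2*(real p*\<rho>)) \<ge> ((real q+1)*X)*(7/8)"
      apply (rule mult_left_mono) using pr apply linarith using Xpos by simp
    show ?thesis using a1 a2 a3 a4 a5 by linarith
  qed
  have L2: "sb \<ge> (7/8)*Y"
  proof -
    have "fact (Suc q) * sb \<ge> (real q+1)^(M+2) * (1 - (real q+1)*e)"
      using h3 e_id by (simp add: algebra_simps)
    then have "sb \<ge> Y * (1 - (real q+1)*e)" unfolding Y_def using fp(3)
      by (simp add: field_simps)
    moreover have "Y * (1 - (real q+1)*e) \<ge> Y * (7/8)"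
      apply (rule mult_left_mono) using qe apply linarith using Ypos by simp
    ultimately show ?thesis by linarith
  qed
  have R1: "sb1 \<le> Z" unfolding Z_def using h4 fp(4) by (simp add: field_simps)
  have R2: "sa \<le> W" unfolding W_def using h5 fp(5) by (simp add: field_simps)
  have R3: "real t \<le> W/10" unfolding W_def using tW fp(5) by (simp add: field_simps)
  have R: "(real p+2)*sb1*(sa + real t) \<le> (real p+2)*(Z*((11/10)*W))"
  proof -
    have "sb1*(sa + real t) \<le> Z*((11/10)*W)"
      using R1 R2 R3 sb1 sa by (intro mult_mono) auto
    then show ?thesis by (simp add: mult.assoc mult_left_mono)
  qed
  have Mg: "(9/5)*((real p+2)*(Z*W)) \<le> (real q+1)*X*Y"
  proof -
    have m: "(9/5) * (real p + 2) * (real q * (real p + 2))^(M+1) \<le> (real q + 1) * ((real p + 1) * (real q + 1))^(M+1)"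
      by (rule margin_real[OF q1 qp M])
    define K where "K = fact (Suc p) * (fact q :: real)"
    have K: "K > 0" unfolding K_def by simp
    have fq: "fact (Suc q) = (real q+1) * fact q" by simp
    have fpp: "fact (Suc (Suc p)) = (real p+2) * fact (Suc p)" by simp
    have e1: "(real q+1)*X*Y = (real q + 1) * ((real p + 1) * (real q + 1))^(M+1) / K"
      unfolding X_def Y_def K_def fq by (rule alg1) simp_all
    have e2: "(real p+2)*(Z*W) = (real p + 2) * (real q * (real p + 2))^(M+1) / K"
      unfolding Z_def W_def K_def fpp by (rule alg2) simp_all
    have "(9/5)*((real p + 2) * (real q * (real p + 2))^(M+1) / K)
        = ((9/5) * (real p + 2) * (real q * (real p + 2))^(M+1)) / K"
      by (simp only: times_divide_eq_right mult.assoc)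
    also have "\<dots> \<le> ((real q + 1) * ((real p + 1) * (real q + 1))^(M+1)) / K"
      by (rule divide_right_mono[OF m]) (use K in simp)
    finally show ?thesis unfolding e1 e2 .
  qed
  have "((real q+1)*s1 - Cb*s2)*sb \<ge> ((7/8)*((real q+1)*X))*((7/8)*Y)"
  proof (rule mult_mono)
    have "(real q+1)*X > 0" using Xpos by simp
    then show "0 \<le> (real q+1)*s1 - Cb*s2" using L1 by linarith
  qed (use L1 L2 Ypos in auto)
  moreover have "((7/8)*((real q+1)*X))*((7/8)*Y) = (49/64)*((real q+1)*X*Y)" by simp
  moreover have "(real p+2)*(Z*((11/10)*W)) = (11/10)*((real p+2)*(Z*W))" by simp
  moreover have "(real p+2)*(Z*W) > 0" using Zpos Wpos by simp
  ultimately show ?thesis using R Mg by linarith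
qed



lemma sum_lt_id: "2 * (\<Sum>i<b. i) = b * (b - 1::nat)"
proof (induction b)
  case 0 then show ?case by simp
next
  case (Suc b)
  have "2 * (\<Sum>i<Suc b. i) = 2 * (\<Sum>i<b. i) + 2 * b" by simp
  also have "\<dots> = b * (b - 1) + 2 * b" using Suc by simp
  also have "\<dots> = Suc b * (Suc b - 1)" by (cases b) (simp_all add: algebra_simps)
  finally show ?case .
qed

lemma tW_nat:
  fixes p t M :: nat
  assumes "M \<ge> t + p + 4" "p \<ge> 1"
  shows "10 * t * fact (p+2) \<le> (p+2)^(M+2)"
proof -
  have t3: "t < 3^t" by (induction t) auto
  have "10 * t \<le> 3^(t+4)" using t3 by (simp add: power_add)
  also have "\<dots> \<le> (p+2)^(t+4)" by (rule power_mono) (use assms(2) in auto)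
  also have "\<dots> \<le> (p+2)^(M - p)" by (rule power_increasing) (use assms in auto)
  finally have a: "10 * t \<le> (p+2)^(M-p)" .
  have b: "fact (p+2) \<le> (p+2)^(p+2)" using fact_le_power[of "p+2", where 'a=nat] by simp
  have "10 * t * fact (p+2) \<le> (p+2)^(M-p) * (p+2)^(p+2)" by (rule mult_mono[OF a b]) auto
  also have "\<dots> = (p+2)^(M - p + (p+2))" by (simp only: power_add)
  also have "M - p + (p+2) = M + 2" using assms(1) by simp
  finally show ?thesis .
qed


theorem mainTheorem19:
  fixes n k l t :: nat
  assumes "k > l" and "l \<ge> t + 2"
    and "real n \<ge> 2 * L k t"
    and "n \<ge> t + 1 + (k - t) * (l - t)"
  shows "r1 n k l t > r1 n l k t"
proof -
  obtain q where q: "l = t + q + 1" "q \<ge> 1" using assms(2) by (intro that[of "l - t - 1"]) auto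
  obtain p where p: "k = t + p + 2" "q \<le> p" using assms(1) q by (intro that[of "k - t - 2"]) auto
  define a where "a = p + 2"
  define b where "b = q + 1"
  have kt: "k - t = a" "l - t = b" using p q by (auto simp: a_def b_def)
  obtain M where M: "n = t + M + 2"
  proof -
    have "n \<ge> t + 2" using assms(4) kt q by (simp add: a_def b_def)
    then show ?thesis using that[of "n - t - 2"] by simp
  qed
  define m where "m = M + 2"
  have nm: "n = m + t" using M by (simp add: m_def)
  have Mab: "M + 1 \<ge> (p+2)*(q+1)" using assms(4) kt M by (simp add: a_def b_def)
  have r1L: "r1 n k l t = A b (int m) (int a) * (Sp (int m) (int b) + int t)"
  proof -
    have "(\<Sum>j\<in>{1..l - t}. (-1) ^ (j - 1) * int ((l - t) choose j) * S (int n - int t - int j) (int k - int t - int j))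
        = A b (int m) (int a)"
      unfolding A_def kt
    proof (rule sum.cong)
      fix j assume j: "j \<in> {1..b}"
      have "int n - int t - int j = int m - int j" "int k - int t - int j = int a - int j"
        using nm p by (auto simp: a_def)
      moreover have "int m - int j \<noteq> 0" using j Mab by (auto simp: m_def b_def)
      ultimately show "(-1) ^ (j - 1) * int (b choose j) * S (int n - int t - int j) (int k - int t - int j)
          = (-1) ^ (j - 1) * int (b choose j) * Sp (int m - int j) (int a - int j)"
        by (simp add: S_Sp)
    qed simp
    moreover have "S (int n - int t) (int l - int t) = Sp (int m) (int b)"
      using nm q S_Sp[of "int m" "int b"] by (simp add: b_def m_def)
    ultimately show ?thesis unfolding r1_def by simp
  qed
  have r1R: "r1 n l k t = A a (int m) (int b) * (Sp (int m) (int a) + int t)"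
  proof -
    have "(\<Sum>j\<in>{1..k - t}. (-1) ^ (j - 1) * int ((k - t) choose j) * S (int n - int t - int j) (int l - int t - int j))
        = A a (int m) (int b)"
      unfolding A_def kt
    proof (rule sum.cong)
      fix j assume j: "j \<in> {1..a}"
      have "int n - int t - int j = int m - int j" "int l - int t - int j = int b - int j"
        using nm q by (auto simp: b_def)
      moreover have "int m - int j \<noteq> 0" using j Mab by (auto simp: m_def a_def)
      ultimately show "(-1) ^ (j - 1) * int (a choose j) * S (int n - int t - int j) (int l - int t - int j)
          = (-1) ^ (j - 1) * int (a choose j) * Sp (int m - int j) (int b - int j)"
        by (simp add: S_Sp)
    qed simp
    moreover have "S (int n - int t) (int k - int t) = Sp (int m) (int a)"
      using nm p S_Sp[of "int m" "int a"] by (simp add: a_def m_def)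
    ultimately show ?thesis unfolding r1_def by simp
  qed
  define s1 where "s1 = Stirling (M+1) (p+1)"
  define s2 where "s2 = Stirling M p"
  define sb where "sb = Stirling (M+2) (q+1)"
  define sb1 where "sb1 = Stirling (M+1) q"
  define sa where "sa = Stirling (M+2) (p+2)"
  define Cb where "Cb = (\<Sum>i<b. i)"
  have Sp1: "Sp (int m - 1) (int a - 1) = int s1"
    using Sp_nat[of "M+1" "p+1"] by (simp add: m_def a_def s1_def add.commute)
  have Sp2: "Sp (int m - 2) (int a - 2) = int s2"
    using Sp_nat[of "M" "p"] by (simp add: m_def a_def s2_def)
  have Spb: "Sp (int m) (int b) = int sb"
    using Sp_nat[of "M+2" "q+1"] by (simp add: m_def b_def sb_def)
  have Spb1: "Sp (int m - 1) (int b - 1) = int sb1"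
    using Sp_nat[of "M+1" "q"] by (simp add: m_def b_def sb1_def add.commute)
  have Spa: "Sp (int m) (int a) = int sa"
    using Sp_nat[of "M+2" "p+2"] by (simp add: m_def a_def sa_def)
  have bm: "int b \<le> int m" "int a \<le> int m" using Mab by (auto simp: a_def b_def m_def)
  have AL: "int b * int s1 - int Cb * int s2 \<le> A b (int m) (int a)"
    using A_lower[OF bm(1), of "int a"] Sp1 Sp2 by (simp add: Cb_def)
  have AL0: "0 \<le> A b (int m) (int a)" by (rule A_nonneg[OF bm(1)])
  have AU: "A a (int m) (int b) \<le> int a * int sb1"
    using A_upper[OF bm(2), of "int b"] Spb1 by simp
  have logs: "real M \<ge> 2*(real p+1)*ln(real p+3)" "real (M+2) \<ge> 2*(real q+1)*ln(real p+3)"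
    "M \<ge> t + p + 4"
  proof -
    define G where "G = (real t + 1) * (real p + 3)"
    have Lk: "L k t = real t + 1 + (real p + 3) * log 2 G"
      unfolding L_def G_def using p by (simp add: algebra_simps)
    have G1: "G \<ge> real p + 3" unfolding G_def by simp
    have lnG: "ln G \<ge> ln (real p + 3)" using G1 by simp
    have ln3: "ln (real p + 3) \<ge> 0" by simp
    have ln2: "0 < ln (2::real)" "ln (2::real) < 1" using ln_2_less_1 by auto
    have "log 2 G = ln G / ln 2" by (simp add: log_def)
    also have "\<dots> \<ge> ln G"
    proof -
      have lnG0: "ln G \<ge> 0" using lnG ln3 by linarith
      have "ln G * ln 2 \<le> ln G * 1" using lnG0 ln2 by (intro mult_left_mono) auto
      then show ?thesis using ln2 by (simp add: le_divide_eq)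
    qed
    finally have lg: "log 2 G \<ge> ln (real p + 3)" using lnG by linarith
    have lg1: "log 2 G \<ge> 1"
    proof -
      have "G \<ge> 2" using G1 by simp
      then show ?thesis by simp
    qed
    have hn: "real n \<ge> 2*real t + 2 + 2*((real p + 3) * log 2 G)"
      using assms(3) unfolding Lk by (simp add: algebra_simps)
    have rn: "real n = real t + real M + 2" using M by simp
    have A1: "(real p + 3) * log 2 G \<ge> (real p + 3) * ln (real p + 3)"
      using lg by (intro mult_left_mono) auto
    have A2': "(real p + 3) * log 2 G \<ge> (real p + 3) * 1"
      using lg1 by (intro mult_left_mono) auto
    then have A2: "(real p + 3) * log 2 G \<ge> real p + 3" by simp
    have t0: "real t \<ge> 0" by simp
    have A3: "(real p + 3) * ln (real p + 3) \<ge> (real p + 1) * ln (real p + 3)"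
      using ln3 by (intro mult_right_mono) auto
    have A4: "(real p + 3) * ln (real p + 3) \<ge> (real q + 1) * ln (real p + 3)"
      using ln3 p(2) by (intro mult_right_mono) auto
    have g1: "real M \<ge> 2*((real p+1)*ln(real p+3))" using hn rn A1 A3 t0 by linarith
    then show "real M \<ge> 2*(real p+1)*ln(real p+3)" by (simp only: mult.assoc)
    have g2: "real M + 2 \<ge> 2*((real q+1)*ln(real p+3))" using hn rn A1 A4 t0 by linarith
    then show "real (M+2) \<ge> 2*(real q+1)*ln(real p+3)" by (simp only: mult.assoc of_nat_add of_nat_numeral)
    have "real M \<ge> real t + real p + 4" using hn rn A2 t0 by linarith
    then show "M \<ge> t + p + 4" by linarith
  qed
  have tW: "10 * real t * fact (Suc (Suc p)) \<le> (real p+2)^(M+2)"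
  proof -
    have "real (10 * t * fact (p+2)) \<le> real ((p+2)^(M+2))"
      using tW_nat[OF logs(3) order.trans[OF q(2) p(2)]] by (simp only: of_nat_le_iff)
    then have "10 * real t * fact (p+2) \<le> (real p+2)^(M+2)"
      by (simp only: of_nat_mult of_nat_fact of_nat_power of_nat_add of_nat_numeral)
    moreover have "fact (p+2) = (fact (Suc (Suc p)) :: real)" by (simp only: add_2_eq_Suc')
    ultimately show ?thesis by simp
  qed
  have h1: "fact (Suc p) * real s1 \<ge> (real p+1)^(M+1) - (real p+1)*(real p)^(M+1)"
  proof -
    have "real ((p+1)^(M+1)) \<le> real (fact (p+1) * s1 + (p+1) * (p+1-1)^(M+1))"
      using stirling_lower[of "p+1" "M+1"] unfolding s1_def by (simp only: of_nat_le_iff)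
    then show ?thesis by (simp add: of_nat_fact algebra_simps)
  qed
  have h2: "fact p * real s2 \<le> (real p)^M"
  proof -
    have "real (fact p * s2) \<le> real (p^M)"
      using stirling_upper[of p M] unfolding s2_def by (simp only: of_nat_le_iff)
    then show ?thesis by (simp add: of_nat_fact)
  qed
  have h3: "fact (Suc q) * real sb \<ge> (real q+1)^(M+2) - (real q+1)*(real q)^(M+2)"
  proof -
    have "real ((q+1)^(M+2)) \<le> real (fact (q+1) * sb + (q+1) * (q+1-1)^(M+2))"
      using stirling_lower[of "q+1" "M+2"] unfolding sb_def by (simp only: of_nat_le_iff)
    then show ?thesis by (simp add: of_nat_fact algebra_simps)
  qed
  have h4: "fact q * real sb1 \<le> (real q)^(M+1)"
  proof -
    have "real (fact q * sb1) \<le> real (q^(M+1))"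
      using stirling_upper[of q "M+1"] unfolding sb1_def by (simp only: of_nat_le_iff)
    then show ?thesis by (simp add: of_nat_fact)
  qed
  have h5: "fact (Suc (Suc p)) * real sa \<le> (real p+2)^(M+2)"
  proof -
    have "real (fact (p+2) * sa) \<le> real ((p+2)^(M+2))"
      using stirling_upper[of "p+2" "M+2"] unfolding sa_def by (simp only: of_nat_le_iff)
    then have "fact (p+2) * real sa \<le> (real p+2)^(M+2)"
      by (simp only: of_nat_mult of_nat_fact of_nat_power of_nat_add of_nat_numeral)
    moreover have "fact (p+2) = (fact (Suc (Suc p)) :: real)" by (simp only: add_2_eq_Suc')
    ultimately show ?thesis by simp
  qed
  have hCb: "2 * real Cb = (real q+1) * real q"
  proof -
    have "2 * Cb = b * (b - 1)" unfolding Cb_def by (rule sum_lt_id)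
    then have "real (2 * Cb) = real (b * (b-1))" by simp
    then show ?thesis by (simp add: b_def algebra_simps)
  qed
  have K: "((real q+1)*real s1 - real Cb*real s2)*real sb > (real p+2)*real sb1*(real sa + real t)"
    by (rule key[OF q(2) p(2) Mab logs(1) logs(2) tW h1 h2 h3 h4 h5 hCb]) simp_all
  have Kint: "(int b * int s1 - int Cb * int s2) * int sb > int a * int sb1 * (int sa + int t)"
  proof -
    have "real_of_int ((int b * int s1 - int Cb * int s2) * int sb) > real_of_int (int a * int sb1 * (int sa + int t))"
      using K by (simp add: a_def b_def add.commute)
    then show ?thesis by (simp only: of_int_less_iff)
  qed
  have "r1 n l k t \<le> int a * int sb1 * (int sa + int t)"
    unfolding r1R Spa by (rule mult_right_mono[OF AU]) simp
  also have "\<dots> < (int b * int s1 - int Cb * int s2) * int sb" by (rule Kint)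
  also have "\<dots> \<le> A b (int m) (int a) * int sb"
    by (rule mult_right_mono[OF AL]) simp
  also have "\<dots> \<le> r1 n k l t"
    unfolding r1L Spb using AL0 by (simp add: algebra_simps)
  finally show ?thesis .
qed

end
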